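(* Let $\lambda,\nu$ be partitions and $s$ a nonnegative integer with $|\nu|\le|\lambda|+s$ and $\mathrm{Std}^0_s(\nu\setminus\lambda)\ne\emptyset$, and suppose that $\mathsf t_{k\leftrightarrow k+1}$ exists for every $\mathsf t\in\mathrm{Std}^0_s(\nu\setminus\lambda)$ and every $1\le k\le s-1$. Then neither of the skew partitions $\nu\ominus(\lambda\cap\nu)$ and $\lambda\ominus(\lambda\cap\nu)$ contains two nodes in the same column.
   Context: $\lambda\cap\nu$ is the partition with parts $\min\{\lambda_i,\nu_i\}$; for $\alpha\subseteq\beta$, $\beta\ominus\alpha$ is the set difference of Young diagrams. $\pm\varepsilon_i$ ($i\ge1$) adds/removes a box in row $i$, $\varepsilon_0=0$. $\mathrm{Std}_s(\nu\setminus\lambda)$ is the set of sequences $\mathsf t=(-\varepsilon_{i_1},+\varepsilon_{j_1},\dots,-\varepsilon_{i_s},+\varepsilon_{j_s})$, $i_k,j_k\ge0$, such that with $\mathsf t(0)=\lambda$, $\mathsf t(k-\frac12)=\mathsf t(k-1)-\varepsilon_{i_k}$, $\mathsf t(k)=\mathsf t(k-\frac12)+\varepsilon_{j_k}$ all are partitions and $\mathsf t(s)=\nu$; $(-\varepsilon_{i_k},+\varepsilon_{j_k})$ is the $k$-th integral step. $\mathrm{Std}^0_s(\nu\setminus\lambda)$ is the subset of those with no integral step $(-\varepsilon_0,+\varepsilon_0)$ and with $\#\{k:i_k=i\}\le\lambda_i$ for every $i\ge1$. $\mathsf t_{k\leftrightarrow k+1}$ is the sequence obtained by interchanging the $k$-th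 and $(k+1)$-th integral steps; it exists if it lies in $\mathrm{Std}_s(\nu\setminus\lambda)$. *)

theory Defs
  imports Main
begin

text \<open>A partition is a function from rows to row lengths; rows are indexed by
  i \<ge> 1, the value at 0 is fixed to be 0 (so that \<epsilon>_0 = 0 is harmless).\<close>
definition is_partition :: "(nat \<Rightarrow> nat) \<Rightarrow> bool" where
  "is_partition p \<longleftrightarrow> p 0 = 0 \<and> (\<forall>i\<ge>1. p (Suc i) \<le> p i) \<and> finite {i. p i \<noteq> 0}"

definition young_diagram :: "(nat \<Rightarrow> nat) \<Rightarrow> (nat \<times> nat) set" where
  "young_diagram p = {(r, c). 1 \<le> r \<and> 1 \<le> c \<and> c \<le> p r}"

definition psize :: "(nat \<Rightarrow> nat) \<Rightarrow> nat" where
  "psize p = sum p {i. p i \<noteq> 0}"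

definition pinter :: "(nat \<Rightarrow> nat) \<Rightarrow> (nat \<Rightarrow> nat) \<Rightarrow> (nat \<Rightarrow> nat)" where
  "pinter p q = (\<lambda>i. min (p i) (q i))"

definition skew :: "(nat \<Rightarrow> nat) \<Rightarrow> (nat \<Rightarrow> nat) \<Rightarrow> (nat \<times> nat) set" where
  "skew beta alpha = young_diagram beta - young_diagram alpha"

definition no_two_in_column :: "(nat \<times> nat) set \<Rightarrow> bool" where
  "no_two_in_column S \<longleftrightarrow> (\<forall>r1 r2 c. (r1, c) \<in> S \<longrightarrow> (r2, c) \<in> S \<longrightarrow> r1 = r2)"

text \<open>-\<epsilon>_i and +\<epsilon>_j, with \<epsilon>_0 = 0\<close>
definition remove_box :: "(nat \<Rightarrow> nat) \<Rightarrow> nat \<Rightarrow> (nat \<Rightarrow> nat)" where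
  "remove_box p i = (if i = 0 then p else p(i := p i - 1))"

definition add_box :: "(nat \<Rightarrow> nat) \<Rightarrow> nat \<Rightarrow> (nat \<Rightarrow> nat)" where
  "add_box p j = (if j = 0 then p else p(j := p j + 1))"

text \<open>An integral step (i, j) stands for (-\<epsilon>_i, +\<epsilon>_j).  valid_path p t q: starting
  at p, every intermediate t(k-1/2), t(k) is a partition (removal of a box from an
  empty row is not allowed), ending at q.\<close>
fun valid_path :: "(nat \<Rightarrow> nat) \<Rightarrow> (nat \<times> nat) list \<Rightarrow> (nat \<Rightarrow> nat) \<Rightarrow> bool" where
  "valid_path p [] q \<longleftrightarrow> p = q"
| "valid_path p ((i, j) # t) q \<longleftrightarrow>
     (i = 0 \<or> 0 < p i) \<and> is_partition (remove_box p i) \<and>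
     is_partition (add_box (remove_box p i) j) \<and>
     valid_path (add_box (remove_box p i) j) t q"

definition Std :: "nat \<Rightarrow> (nat \<Rightarrow> nat) \<Rightarrow> (nat \<Rightarrow> nat) \<Rightarrow> (nat \<times> nat) list set" where
  "Std s lam nu = {t. length t = s \<and> is_partition lam \<and> valid_path lam t nu}"

definition Std0 :: "nat \<Rightarrow> (nat \<Rightarrow> nat) \<Rightarrow> (nat \<Rightarrow> nat) \<Rightarrow> (nat \<times> nat) list set" where
  "Std0 s lam nu = {t \<in> Std s lam nu. (0, 0) \<notin> set t \<and>
      (\<forall>i\<ge>1. length (filter (\<lambda>st. fst st = i) t) \<le> lam i)}"

text \<open>t_{k<->k+1}: interchange the k-th and (k+1)-th integral steps (1-based k).\<close>
definition swap_steps :: "nat \<Rightarrow> (nat \<times> nat) list \<Rightarrow> (nat \<times> nat) list" where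
  "swap_steps k t = t[k - 1 := t ! k, k := t ! (k - 1)]"

end

theory Submission
  imports Defs "HOL-Library.Multiset"
begin

definition stp :: "(nat \<Rightarrow> nat) \<Rightarrow> nat \<times> nat \<Rightarrow> (nat \<Rightarrow> nat)" where
  "stp p st = add_box (remove_box p (fst st)) (snd st)"

lemma swap_mset:
  assumes "1 \<le> k" "k < length t"
  shows "mset (swap_steps k t) = mset t"
  using assms mset_swap[of k t "k - 1"] unfolding swap_steps_def by simp

lemma length_filter_mset_eq:
  "mset xs = mset ys \<Longrightarrow> length (filter P xs) = length (filter P ys)"
  by (metis mset_filter size_mset)

lemma Std0_swap:
  assumes "t \<in> Std0 s lam nu" "1 \<le> k" "k \<le> s - 1" "swap_steps k t \<in> Std s lam nu"
  shows "swap_steps k t \<in> Std0 s lam nu"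
proof -
  have len: "length t = s" using assms(1) by (simp add: Std0_def Std_def)
  have m: "mset (swap_steps k t) = mset t" using assms len by (intro swap_mset) auto
  hence "set (swap_steps k t) = set t" by (metis set_mset_mset)
  thus ?thesis using assms m length_filter_mset_eq[OF m] by (auto simp: Std0_def)
qed

lemma move_front:
  assumes cl: "\<And>t k. t \<in> S \<Longrightarrow> 1 \<le> k \<Longrightarrow> k < length t \<Longrightarrow> swap_steps k t \<in> S"
  shows "a @ xs @ y # zs \<in> S \<Longrightarrow> a @ y # xs @ zs \<in> S"
proof (induction xs arbitrary: zs rule: rev_induct)
  case Nil thus ?case by simp
next
  case (snoc x xs)
  let ?l = "a @ xs @ x # y # zs"
  have "?l \<in> S" using snoc.prems by simp
  hence "swap_steps (length a + length xs + 1) ?l \<in> S"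
    by (intro cl) auto
  moreover have "swap_steps (length a + length xs + 1) ?l = a @ xs @ y # x # zs"
    unfolding swap_steps_def
    by (simp add: list_update_append nth_append)
  ultimately have "a @ xs @ y # (x # zs) \<in> S" by simp
  from snoc.IH[OF this] show ?case by simp
qed

lemma partition_perm:
  assumes cl: "\<And>t k. t \<in> S \<Longrightarrow> 1 \<le> k \<Longrightarrow> k < length t \<Longrightarrow> swap_steps k t \<in> S"
  shows "a @ b @ t \<in> S \<Longrightarrow> \<forall>x\<in>set b. \<not> P x \<Longrightarrow>
     a @ filter P t @ b @ filter (\<lambda>x. \<not> P x) t \<in> S"
proof (induction t arbitrary: a b)
  case Nil thus ?case by simp
next
  case (Cons x t)
  show ?case
  proof (cases "P x")
    case True
    have "a @ x # b @ t \<in> S" using move_front[OF cl, of a b x t] Cons.prems by simp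
    hence "(a @ [x]) @ b @ t \<in> S" by simp
    from Cons.IH[OF this Cons.prems(2)] True show ?thesis by simp
  next
    case False
    have "a @ (b @ [x]) @ t \<in> S" using Cons.prems by simp
    from Cons.IH[OF this] False Cons.prems(2) show ?thesis by simp
  qed
qed

lemma valid_prefix:
  "valid_path p (u @ v) q \<Longrightarrow> is_partition p \<Longrightarrow>
   is_partition (foldl stp p u) \<and> valid_path (foldl stp p u) v q"
proof (induction u arbitrary: p)
  case Nil thus ?case by simp
next
  case (Cons st u)
  obtain i j where st: "st = (i, j)" by fastforce
  show ?case using Cons.prems Cons.IH[of "add_box (remove_box p i) j"]
    by (simp add: st stp_def)
qed

lemma valid_upper:
  "valid_path p t q \<Longrightarrow> 1 \<le> x \<Longrightarrow>
   q x \<le> p x + length (filter (\<lambda>(i,j). j = x \<and> i \<noteq> x) t)"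
proof (induction p t q rule: valid_path.induct)
  case (1 p q) thus ?case by simp
next
  case (2 p i j t q)
  let ?n = "add_box (remove_box p i) j"
  have IH: "q x \<le> ?n x + length (filter (\<lambda>(i,j). j = x \<and> i \<noteq> x) t)"
    using 2 by simp
  have "?n x \<le> p x + (if j = x \<and> i \<noteq> x then 1 else 0)"
    using 2(2) by (auto simp: add_box_def remove_box_def)
  thus ?case using IH by auto
qed

lemma valid_lower:
  "valid_path p t q \<Longrightarrow> 1 \<le> x \<Longrightarrow>
   p x \<le> q x + length (filter (\<lambda>(i,j). i = x \<and> j \<noteq> x) t)"
proof (induction p t q rule: valid_path.induct)
  case (1 p q) thus ?case by simp
next
  case (2 p i j t q)
  let ?n = "add_box (remove_box p i) j"
  have IH: "?n x \<le> q x + length (filter (\<lambda>(i,j). i = x \<and> j \<noteq> x) t)"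
    using 2 by simp
  have "p x \<le> ?n x + (if i = x \<and> j \<noteq> x then 1 else 0)"
    using 2(2) by (auto simp: add_box_def remove_box_def)
  thus ?case using IH by auto
qed

lemma fold_add:
  "\<forall>st\<in>set u. snd st = x \<and> fst st \<noteq> x \<Longrightarrow> 1 \<le> x \<Longrightarrow>
   foldl stp p u x = p x + length u \<and> (\<forall>y. y \<noteq> x \<longrightarrow> foldl stp p u y \<le> p y)"
proof (induction u arbitrary: p)
  case Nil thus ?case by simp
next
  case (Cons st u)
  let ?n = "stp p st"
  have "?n x = p x + 1" "\<forall>y. y \<noteq> x \<longrightarrow> ?n y \<le> p y"
    using Cons.prems by (auto simp: stp_def add_box_def remove_box_def)
  with Cons.IH[of ?n] Cons.prems show ?case by fastforce
qed

lemma fold_rem: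
  "\<forall>st\<in>set u. fst st = x \<and> snd st \<noteq> x \<Longrightarrow> 1 \<le> x \<Longrightarrow>
   foldl stp p u x = p x - length u \<and> (\<forall>y. y \<noteq> x \<longrightarrow> p y \<le> foldl stp p u y)"
proof (induction u arbitrary: p)
  case Nil thus ?case by simp
next
  case (Cons st u)
  let ?n = "stp p st"
  have "?n x = p x - 1" "\<forall>y. y \<noteq> x \<longrightarrow> p y \<le> ?n y"
    using Cons.prems by (auto simp: stp_def add_box_def remove_box_def)
  with Cons.IH[of ?n] Cons.prems show ?case by fastforce
qed

lemma part_mono:
  assumes "is_partition p" "1 \<le> a" "a \<le> b" shows "p b \<le> p a"
  using assms(3)
proof (induction b rule: dec_induct)
  case base thus ?case by simp
next
  case (step n)
  have "p (Suc n) \<le> p n" using assms(1,2) step(1) unfolding is_partition_def by auto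
  thus ?case using step by simp
qed

theorem lemma4p22:
  fixes lam nu :: "nat \<Rightarrow> nat" and s :: nat
  assumes "is_partition lam" and "is_partition nu"
    and "psize nu \<le> psize lam + s"
    and "Std0 s lam nu \<noteq> {}"
    and "\<forall>t \<in> Std0 s lam nu. \<forall>k. 1 \<le> k \<and> k \<le> s - 1 \<longrightarrow> swap_steps k t \<in> Std s lam nu"
  shows "no_two_in_column (skew nu (pinter lam nu)) \<and>
         no_two_in_column (skew lam (pinter lam nu))"
proof -
  obtain t where t: "t \<in> Std0 s lam nu" using assms(4) by blast
  have cl: "\<And>t k. t \<in> Std0 s lam nu \<Longrightarrow> 1 \<le> k \<Longrightarrow> k < length t \<Longrightarrow>
      swap_steps k t \<in> Std0 s lam nu"
  proof -
    fix t k assume a: "t \<in> Std0 s lam nu" "1 \<le> k" "k < length t"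
    have "length t = s" using a(1) by (simp add: Std0_def Std_def)
    thus "swap_steps k t \<in> Std0 s lam nu"
      using a assms(5) Std0_swap[of t s lam nu k] by auto
  qed
  have perm: "\<And>P. valid_path lam (filter P t @ filter (\<lambda>x. \<not> P x) t) nu"
  proof -
    fix P
    have "[] @ filter P t @ [] @ filter (\<lambda>x. \<not> P x) t \<in> Std0 s lam nu"
      using partition_perm[OF cl, of "[]" "[]" t P] t by simp
    thus "valid_path lam (filter P t @ filter (\<lambda>x. \<not> P x) t) nu"
      by (simp add: Std0_def Std_def)
  qed
  have vt: "valid_path lam t nu" using t by (simp add: Std0_def Std_def)
  have A: False if r: "1 \<le> r" "r < x" "c \<le> nu r" "\<not> c \<le> lam r" "c \<le> nu x" "\<not> c \<le> lam x"
    for r x c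
  proof -
    let ?P = "\<lambda>(i::nat,j::nat). j = x \<and> i \<noteq> x"
    let ?u = "filter ?P t"
    let ?m = "foldl stp lam ?u"
    have mp: "is_partition ?m" using valid_prefix[OF perm[of ?P] assms(1)] by simp
    have fa: "?m x = lam x + length ?u \<and> (\<forall>y. y \<noteq> x \<longrightarrow> ?m y \<le> lam y)"
      using r by (intro fold_add) auto
    have "nu x \<le> lam x + length ?u" using valid_upper[OF vt, of x] r by simp
    hence "c \<le> ?m x" using fa r by simp
    moreover have "?m (x - 1) \<le> lam (x - 1)" using fa r by simp
    moreover have "lam (x - 1) \<le> lam r" using part_mono[OF assms(1), of r "x - 1"] r by simp
    moreover have "?m x \<le> ?m (x - 1)" using part_mono[OF mp, of "x - 1" x] r by simp
    ultimately show False using r by simp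
  qed
  have B: False if r: "1 \<le> x" "x < r" "c \<le> lam r" "\<not> c \<le> nu r" "c \<le> lam x" "\<not> c \<le> nu x"
    for r x c
  proof -
    let ?P = "\<lambda>(i::nat,j::nat). i = x \<and> j \<noteq> x"
    let ?u = "filter ?P t"
    let ?m = "foldl stp lam ?u"
    have mp: "is_partition ?m" using valid_prefix[OF perm[of ?P] assms(1)] by simp
    have fa: "?m x = lam x - length ?u \<and> (\<forall>y. y \<noteq> x \<longrightarrow> lam y \<le> ?m y)"
      using r by (intro fold_rem) auto
    have "lam x \<le> nu x + length ?u" using valid_lower[OF vt, of x] r by simp
    hence "?m x \<le> nu x" using fa by simp
    moreover have "lam r \<le> ?m r" using fa r by simp
    moreover have "?m r \<le> ?m x" using part_mono[OF mp, of x r] r by simp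
    ultimately show False using r by simp
  qed
  show ?thesis
  proof
    show "no_two_in_column (skew nu (pinter lam nu))"
      unfolding no_two_in_column_def skew_def pinter_def
    proof (intro allI impI)
      fix r1 r2 c assume h: "(r1, c) \<in> young_diagram nu - young_diagram (\<lambda>i. min (lam i) (nu i))"
        "(r2, c) \<in> young_diagram nu - young_diagram (\<lambda>i. min (lam i) (nu i))"
      hence h1: "1 \<le> r1" "1 \<le> r2" "c \<le> nu r1" "\<not> c \<le> lam r1" "c \<le> nu r2" "\<not> c \<le> lam r2"
        by (auto simp: young_diagram_def)
      show "r1 = r2"
      proof (rule ccontr)
        assume "r1 \<noteq> r2"
        then consider "r1 < r2" | "r2 < r1" by linarith
        thus False using A[of r1 r2 c] A[of r2 r1 c] h1 by cases auto
      qed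
    qed
    show "no_two_in_column (skew lam (pinter lam nu))"
      unfolding no_two_in_column_def skew_def pinter_def
    proof (intro allI impI)
      fix r1 r2 c assume h: "(r1, c) \<in> young_diagram lam - young_diagram (\<lambda>i. min (lam i) (nu i))"
        "(r2, c) \<in> young_diagram lam - young_diagram (\<lambda>i. min (lam i) (nu i))"
      hence h1: "1 \<le> r1" "1 \<le> r2" "c \<le> lam r1" "\<not> c \<le> nu r1" "c \<le> lam r2" "\<not> c \<le> nu r2"
        by (auto simp: young_diagram_def)
      show "r1 = r2"
      proof (rule ccontr)
        assume "r1 \<noteq> r2"
        then consider "r1 < r2" | "r2 < r1" by linarith
        thus False using B[of r1 r2 c] B[of r2 r1 c] h1 by cases auto
      qed
    qed
  qed
qed

end
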